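(* Let $q$ be a prime power, $m\ge 1$, and let $\mathcal{C}\subseteq\mathbb{F}_{q^m}^n$ be an $\mathbb{F}_{q^m}$-linear code of dimension $k$ whose length $n=n_1+\dots+n_\ell$ is partitioned into $\ell$ blocks (all $n_i>0$). Let $\mathbf{H}=(\mathbf{H}^{(1)}\mid\dots\mid\mathbf{H}^{(\ell)})\in\mathbb{F}_{q^m}^{(n-k)\times n}$, $\mathbf{H}^{(i)}\in\mathbb{F}_{q^m}^{(n-k)\times n_i}$, be a parity-check matrix of $\mathcal{C}$. Let $s\ge 1$ and let $\mathbf{E}=(\mathbf{E}^{(1)}\mid\dots\mid\mathbf{E}^{(\ell)})\in\mathbb{F}_{q^m}^{s\times n}$ with $\mathbf{E}^{(i)}\in\mathbb{F}_{q^m}^{s\times n_i}$ and $\operatorname{rk}_q(\mathbf{E}^{(i)})=t_i$ for all $i\in[1:\ell]$, so that $\mathbf{E}$ has sum-rank weight $t=\sum_{i=1}^\ell t_i$, and assume $t<n-k$. Let $\mathbf{S}=\mathbf{H}\mathbf{E}^\top\in\mathbb{F}_{q^m}^{(n-k)\times s}$ and let $\mathbf{P}\in\mathbb{F}_{q^m}^{(n-k)\times(n-k)}$ with $\operatorname{rk}_{q^m}(\mathbf{P})=n-k$ be such that $\mathbf{P}\mathbf{S}$ is in row-echelon form. Then $\mathbf{P}\mathbf{S}$ has at least $n-k-t$ zero rows. Moreover, if $\mathbf{H}_{\mathrm{sub}}$ denotes the submatrix of $\mathbf{P}\mathbf{H}$ consisting of the rows corresponding to the zero rows of $\mathbf{P}\mathbf{S}$,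 then the $\mathbb{F}_{q^m}$-row space of $\mathbf{H}_{\mathrm{sub}}$ equals $\ker_r(\mathbf{E})_{q^m}\cap\mathcal{C}^\perp$, equivalently $\ker_r(\mathbf{E})_{q^m}$ intersected with the $\mathbb{F}_{q^m}$-row space of $\mathbf{H}$.
   Context: Fix an ordered basis $\mathbf{b}=(b_1,\dots,b_m)$ of $\mathbb{F}_{q^m}$ over $\mathbb{F}_q$; for $\alpha\in\mathbb{F}_{q^m}$, $\operatorname{ext}(\alpha)\in\mathbb{F}_q^{m}$ is the column vector with $\alpha=\mathbf{b}\cdot\operatorname{ext}(\alpha)$, and $\operatorname{ext}$ is applied entrywise to vectors and matrices (an $a\times b$ matrix over $\mathbb{F}_{q^m}$ becomes an $am\times b$ matrix over $\mathbb{F}_q$). For a matrix $\mathbf{X}$ over $\mathbb{F}_{q^m}$, $\operatorname{rk}_q(\mathbf{X}):=\operatorname{rk}(\operatorname{ext}(\mathbf{X}))$ over $\mathbb{F}_q$ and $\operatorname{rk}_{q^m}$ is the usual rank over $\mathbb{F}_{q^m}$. For a vector $\mathbf{x}=(\mathbf{x}^{(1)}\mid\dots\mid\mathbf{x}^{(\ell)})$ (or matrix with column blocks) the sum-rank weight w.r.t. the partition $(n_1,\dots,n_\ell)$ is $\sum_i\operatorname{rk}_q(\mathbf{x}^{(i)})$. For a matrix $\mathbf{M}$ over $\mathbb{F}_{q^m}$ with $n$ columns, $\ker_r(\mathbf{M})_{q^m}=\{\mathbf{v}\in\mathbb{F}_{q^m}^n:\mathbf{M}\mathbf{v}^\top=\mathbf{0}\}$.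 $\mathcal{C}^\perp$ is the dual code, i.e. the $\mathbb{F}_{q^m}$-row space of $\mathbf{H}$. *)

theory Defs
  imports "Jordan_Normal_Form.DL_Rank" "Jordan_Normal_Form.DL_Submatrix"
begin

text \<open>The small field F_q is a finite field type 'f, embedded into the big field type 'a
  (playing F_{q^m}) via a field homomorphism emb. A basis b of 'a over 'f has length m.\<close>

definition ext_elem :: "('f::field \<Rightarrow> 'a::field) \<Rightarrow> 'a list \<Rightarrow> 'a \<Rightarrow> 'f vec" where
  "ext_elem emb b \<alpha> = (THE c. c \<in> carrier_vec (length b) \<and>
       \<alpha> = (\<Sum>j<length b. emb (c $ j) * b ! j))"

text \<open>ext applied entrywise: an a x c matrix becomes an (a*m) x c matrix over 'f;
  entry (i,j) is replaced by the column ext(X(i,j)), occupying rows i*m .. i*m+m-1.\<close>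
definition ext_mat :: "('f::field \<Rightarrow> 'a::field) \<Rightarrow> 'a list \<Rightarrow> 'a mat \<Rightarrow> 'f mat" where
  "ext_mat emb b X = mat (dim_row X * length b) (dim_col X)
      (\<lambda>(r, c). ext_elem emb b (X $$ (r div length b, c)) $ (r mod length b))"

definition rank_q :: "('f::field \<Rightarrow> 'a::field) \<Rightarrow> 'a list \<Rightarrow> 'a mat \<Rightarrow> nat" where
  "rank_q emb b X = vec_space.rank (dim_row (ext_mat emb b X)) (ext_mat emb b X)"

definition rank_qm :: "'a::field mat \<Rightarrow> nat" where
  "rank_qm A = vec_space.rank (dim_row A) A"

definition col_block :: "nat list \<Rightarrow> nat \<Rightarrow> 'a mat \<Rightarrow> 'a mat" where
  "col_block ns i X = submatrix X UNIV {sum_list (take i ns) ..< sum_list (take (Suc i) ns)}"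

definition sum_rank_weight :: "('f::field \<Rightarrow> 'a::field) \<Rightarrow> 'a list \<Rightarrow> nat list \<Rightarrow> 'a mat \<Rightarrow> nat" where
  "sum_rank_weight emb b ns X = (\<Sum>i<length ns. rank_q emb b (col_block ns i X))"

text \<open>(Not necessarily reduced) row echelon form: f i is the pivot column of row i
  (= number of columns if the row is zero); pivots strictly increase, zero rows at the bottom.\<close>
definition row_echelon :: "'a::zero mat \<Rightarrow> bool" where
  "row_echelon A \<longleftrightarrow> (\<exists>f. \<forall>i < dim_row A. f i \<le> dim_col A \<and>
      (\<forall>j < f i. A $$ (i, j) = 0) \<and>
      (f i < dim_col A \<longrightarrow> A $$ (i, f i) \<noteq> 0) \<and>
      (Suc i < dim_row A \<longrightarrow> f i < f (Suc i) \<or> f (Suc i) = dim_col A))"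

definition row_space :: "'a::comm_ring_1 mat \<Rightarrow> 'a vec set" where
  "row_space M = {v. \<exists>x \<in> carrier_vec (dim_row M). v = transpose_mat M *\<^sub>v x}"

definition right_kernel :: "'a::comm_ring_1 mat \<Rightarrow> 'a vec set" where
  "right_kernel M = {v \<in> carrier_vec (dim_col M). M *\<^sub>v v = 0\<^sub>v (dim_row M)}"

definition dual_code :: "nat \<Rightarrow> 'a::comm_ring_1 vec set \<Rightarrow> 'a vec set" where
  "dual_code n C = {v \<in> carrier_vec n. \<forall>c \<in> C. v \<bullet> c = 0}"

definition zero_rows :: "'a::zero mat \<Rightarrow> nat set" where
  "zero_rows A = {j. j < dim_row A \<and> row A j = 0\<^sub>v (dim_col A)}"

end

theory Submission
  imports Defs
begin

lemma echelon_facts: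
  fixes A :: "'a::field mat"
  assumes ref: "row_echelon A"
  shows "\<exists>r \<le> dim_row A. (\<forall>j<dim_row A. (row A j = 0\<^sub>v (dim_col A)) \<longleftrightarrow> r \<le> j)
     \<and> (\<forall>z \<in> carrier_vec (dim_row A). transpose_mat A *\<^sub>v z = 0\<^sub>v (dim_col A) \<longrightarrow> (\<forall>j<r. z $ j = 0))"
proof -
  define N where "N = dim_row A"
  define S where "S = dim_col A"
  obtain f where F: "\<forall>i < N. f i \<le> S \<and>
      (\<forall>j < f i. A $$ (i, j) = 0) \<and>
      (f i < S \<longrightarrow> A $$ (i, f i) \<noteq> 0) \<and>
      (Suc i < N \<longrightarrow> f i < f (Suc i) \<or> f (Suc i) = S)"
    using ref unfolding row_echelon_def N_def S_def by blast
  have zero_iff: "(row A j = 0\<^sub>v S) \<longleftrightarrow> f j = S" if j: "j < N" for j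
  proof
    assume z: "row A j = 0\<^sub>v S"
    show "f j = S"
    proof (rule ccontr)
      assume "f j \<noteq> S"
      then have "f j < S" using F j by force
      then have "A $$ (j, f j) \<noteq> 0" using F j by blast
      moreover have "row A j $ f j = A $$ (j, f j)" using \<open>f j < S\<close> j by (simp add: N_def S_def)
      ultimately show False using z \<open>f j < S\<close> by simp
    qed
  next
    assume "f j = S"
    then show "row A j = 0\<^sub>v S" using F j by (intro eq_vecI) (auto simp: N_def S_def)
  qed
  have mono: "i < j \<longrightarrow> j < N \<longrightarrow> f i < f j \<or> f j = S" for i j
  proof (induction j)
    case 0
    then show ?case by simp
  next
    case (Suc j)
    show ?case
    proof (intro impI)
      assume a: "i < Suc j" "Suc j < N"
      have Fj: "f j < f (Suc j) \<or> f (Suc j) = S" using F a(2) by auto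
      have Fs: "f (Suc j) \<le> S" using F a(2) by auto
      show "f i < f (Suc j) \<or> f (Suc j) = S"
      proof (cases "i = j")
        case True then show ?thesis using Fj by simp
      next
        case False
        then have "f i < f j \<or> f j = S" using Suc a by auto
        then show ?thesis using Fj Fs by auto
      qed
    qed
  qed
  define r where "r = (if \<exists>j<N. f j = S then LEAST j. j<N \<and> f j = S else N)"
  have r_le: "r \<le> N"
  proof (cases "\<exists>j<N. f j = S")
    case True
    then have "r < N" unfolding r_def using LeastI_ex[of "\<lambda>j. j<N \<and> f j = S"] by auto
    then show ?thesis by simp
  qed (auto simp: r_def)
  have r_prop: "f j = S \<longleftrightarrow> r \<le> j" if j: "j < N" for j
  proof (cases "\<exists>j<N. f j = S")
    case True
    have rl: "r < N \<and> f r = S" unfolding r_def using True LeastI_ex[of "\<lambda>j. j<N \<and> f j = S"] by auto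
    show ?thesis
    proof
      assume "f j = S"
      then show "r \<le> j" unfolding r_def using True j by (auto intro: Least_le)
    next
      assume "r \<le> j"
      then consider "r = j" | "r < j" by linarith
      then show "f j = S"
      proof cases
        case 1 then show ?thesis using rl by simp
      next
        case 2
        then have "f r < f j \<or> f j = S" using mono j by blast
        then show ?thesis using rl F j by force
      qed
    qed
  next
    case False
    then show ?thesis using j unfolding r_def by auto
  qed
  have indep: "\<forall>j<r. z $ j = 0" if z: "z \<in> carrier_vec N" and Az: "transpose_mat A *\<^sub>v z = 0\<^sub>v S" for z
  proof -
    have sumz: "(\<Sum>i<N. A $$ (i, c) * z $ i) = 0" if c: "c < S" for c
    proof -
      have "(transpose_mat A *\<^sub>v z) $ c = 0" using Az c by simp
      moreover have "(transpose_mat A *\<^sub>v z) $ c = col A c \<bullet> z" using c by (simp add: S_def)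
      moreover have "col A c \<bullet> z = (\<Sum>i<N. A $$ (i, c) * z $ i)"
        using z c unfolding scalar_prod_def by (auto simp: N_def S_def lessThan_atLeast0 intro!: sum.cong)
      ultimately show ?thesis by simp
    qed
    show ?thesis
    proof (intro allI impI)
      fix j assume "j < r"
      then show "z $ j = 0"
      proof (induction j rule: less_induct)
        case (less j)
        have jN: "j < N" using less.prems r_le by simp
        have fjS: "f j < S" using r_prop[OF jN] less.prems F jN by force
        have nz: "A $$ (j, f j) \<noteq> 0" using F jN fjS by blast
        have "(\<Sum>i<N. A $$ (i, f j) * z $ i) = (\<Sum>i<N. if i = j then A $$ (j, f j) * z $ j else 0)"
        proof (rule sum.cong)
          fix i assume i: "i \<in> {..<N}"
          show "A $$ (i, f j) * z $ i = (if i = j then A $$ (j, f j) * z $ j else 0)"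
          proof (cases "i = j")
            case False
            show ?thesis
            proof (cases "i < j")
              case True
              then show ?thesis using less.IH[of i] less.prems by auto
            next
              case f: False
              then have "j < i" using False by simp
              then have "f j < f i \<or> f i = S" using mono i by blast
              then have "f j < f i" using fjS by auto
              then show ?thesis using F i False by auto
            qed
          qed simp
        qed simp
        also have "\<dots> = A $$ (j, f j) * z $ j" using jN by simp
        finally show ?case using sumz[OF fjS] nz by simp
      qed
    qed
  qed
  show ?thesis
    using r_le zero_iff r_prop indep unfolding N_def S_def by blast
qed

lemma pick_bij:
  assumes "finite I"
  shows "bij_betw (pick I) {..<card I} I"
proof -
  have inj: "inj_on (pick I) {..<card I}"
  proof (rule inj_onI)
    fix x y assume "x \<in> {..<card I}" "y \<in> {..<card I}" "pick I x = pick I y"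
    then show "x = y" using pick_mono_le[of x I y] pick_mono_le[of y I x]
      by (metis lessThan_iff nat_neq_iff order_less_irrefl)
  qed
  have sub: "pick I ` {..<card I} \<subseteq> I" using pick_in_set_le by auto
  have "card (pick I ` {..<card I}) = card I" using card_image[OF inj] by simp
  then have "pick I ` {..<card I} = I" using card_subset_eq[OF assms sub] by simp
  then show ?thesis using inj unfolding bij_betw_def by simp
qed

lemma row_space_submatrix:
  fixes A :: "'a::comm_ring_1 mat"
  assumes A: "A \<in> carrier_mat N K" and I: "I \<subseteq> {..<N}"
  shows "row_space (submatrix A I UNIV) =
    {transpose_mat A *\<^sub>v z | z. z \<in> carrier_vec N \<and> (\<forall>j<N. j \<notin> I \<longrightarrow> z $ j = 0)}"
proof -
  have finI: "finite I" using I finite_subset by blast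
  have cI: "{i. i < dim_row A \<and> i \<in> I} = I" using A I by auto
  have cK: "{j. j < dim_col A \<and> j \<in> UNIV} = {..<K}" using A by auto
  define R where "R = card I"
  have dimB: "submatrix A I UNIV \<in> carrier_mat R K"
    unfolding carrier_mat_def using cI cK by (simp add: dim_submatrix R_def)
  have entB: "submatrix A I UNIV $$ (i, c) = A $$ (pick I i, c)" if "i < R" "c < K" for i c
    using submatrix_index[of i A I c UNIV] that cI cK A by (simp add: R_def pick_UNIV)
  have bij: "bij_betw (pick I) {..<R} I" using pick_bij[OF finI] by (simp add: R_def)
  have lhs: "(transpose_mat (submatrix A I UNIV) *\<^sub>v x) $ c = (\<Sum>i<R. A $$ (pick I i, c) * x $ i)"
    if x: "x \<in> carrier_vec R" and c: "c < K" for x c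
  proof -
    have "(transpose_mat (submatrix A I UNIV) *\<^sub>v x) $ c = col (submatrix A I UNIV) c \<bullet> x"
      using dimB c by simp
    also have "\<dots> = (\<Sum>i\<in>{0..<R}. col (submatrix A I UNIV) c $ i * x $ i)"
      unfolding scalar_prod_def using x by simp
    also have "\<dots> = (\<Sum>i<R. A $$ (pick I i, c) * x $ i)"
      using dimB c entB by (auto simp: lessThan_atLeast0 intro!: sum.cong)
    finally show ?thesis .
  qed
  have rhs: "(transpose_mat A *\<^sub>v z) $ c = (\<Sum>j<N. A $$ (j, c) * z $ j)"
    if z: "z \<in> carrier_vec N" and c: "c < K" for z c
  proof -
    have "(transpose_mat A *\<^sub>v z) $ c = col A c \<bullet> z"
      using A c by simp
    also have "\<dots> = (\<Sum>i\<in>{0..<N}. col A c $ i * z $ i)"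
      unfolding scalar_prod_def using z by simp
    also have "\<dots> = (\<Sum>j<N. A $$ (j, c) * z $ j)"
      using A c by (auto simp: lessThan_atLeast0 intro!: sum.cong)
    finally show ?thesis .
  qed
  have rhsI: "(\<Sum>j<N. A $$ (j, c) * z $ j) = (\<Sum>j\<in>I. A $$ (j, c) * z $ j)"
    if z0: "\<forall>j<N. j \<notin> I \<longrightarrow> z $ j = 0" for z c
    by (rule sum.mono_neutral_right) (use I z0 in auto)
  have reidx: "(\<Sum>i<R. g (pick I i)) = (\<Sum>j\<in>I. g j)" for g :: "nat \<Rightarrow> 'a"
    using sum.reindex_bij_betw[OF bij, of g] by simp
  show ?thesis
  proof (rule Set.set_eqI, rule iffI)
    fix v assume "v \<in> row_space (submatrix A I UNIV)"
    then obtain x where x: "x \<in> carrier_vec R" and v: "v = transpose_mat (submatrix A I UNIV) *\<^sub>v x"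
      unfolding row_space_def using dimB by auto
    define z where "z = vec N (\<lambda>j. if j \<in> I then x $ card {a\<in>I. a < j} else 0)"
    have z: "z \<in> carrier_vec N" "\<forall>j<N. j \<notin> I \<longrightarrow> z $ j = 0" unfolding z_def by auto
    have zp: "z $ pick I i = x $ i" if "i < R" for i
    proof -
      have "pick I i \<in> I" using pick_in_set_le that by (simp add: R_def)
      then have "pick I i < N" using I by auto
      then show ?thesis unfolding z_def using \<open>pick I i \<in> I\<close> card_pick_le[of i I] that by (simp add: R_def)
    qed
    have "v = transpose_mat A *\<^sub>v z"
    proof (rule eq_vecI)
      show "dim_vec v = dim_vec (transpose_mat A *\<^sub>v z)" using v dimB A by simp
      fix c assume "c < dim_vec (transpose_mat A *\<^sub>v z)"
      then have c: "c < K" using A by simp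
      have "v $ c = (\<Sum>i<R. A $$ (pick I i, c) * x $ i)" using lhs[OF x c] v by simp
      also have "\<dots> = (\<Sum>i<R. A $$ (pick I i, c) * z $ pick I i)" using zp by simp
      also have "\<dots> = (\<Sum>j\<in>I. A $$ (j, c) * z $ j)" using reidx[of "\<lambda>j. A $$ (j, c) * z $ j"] by simp
      also have "\<dots> = (transpose_mat A *\<^sub>v z) $ c" using rhs[OF z(1) c] rhsI[OF z(2)] by simp
      finally show "v $ c = (transpose_mat A *\<^sub>v z) $ c" .
    qed
    then show "v \<in> {transpose_mat A *\<^sub>v z | z. z \<in> carrier_vec N \<and> (\<forall>j<N. j \<notin> I \<longrightarrow> z $ j = 0)}"
      using z by blast
  next
    fix v assume "v \<in> {transpose_mat A *\<^sub>v z | z. z \<in> carrier_vec N \<and> (\<forall>j<N. j \<notin> I \<longrightarrow> z $ j = 0)}"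
    then obtain z where z: "z \<in> carrier_vec N" "\<forall>j<N. j \<notin> I \<longrightarrow> z $ j = 0" and v: "v = transpose_mat A *\<^sub>v z"
      by blast
    define x where "x = vec R (\<lambda>i. z $ pick I i)"
    have x: "x \<in> carrier_vec R" unfolding x_def by simp
    have "v = transpose_mat (submatrix A I UNIV) *\<^sub>v x"
    proof (rule eq_vecI)
      show "dim_vec v = dim_vec (transpose_mat (submatrix A I UNIV) *\<^sub>v x)" using v dimB A by simp
      fix c assume "c < dim_vec (transpose_mat (submatrix A I UNIV) *\<^sub>v x)"
      then have c: "c < K" using dimB by simp
      have "v $ c = (\<Sum>j\<in>I. A $$ (j, c) * z $ j)" using rhs[OF z(1) c] rhsI[OF z(2)] v by simp
      also have "\<dots> = (\<Sum>i<R. A $$ (pick I i, c) * z $ pick I i)" using reidx[of "\<lambda>j. A $$ (j, c) * z $ j"] by simp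
      also have "\<dots> = (\<Sum>i<R. A $$ (pick I i, c) * x $ i)" unfolding x_def by simp
      also have "\<dots> = (transpose_mat (submatrix A I UNIV) *\<^sub>v x) $ c" using lhs[OF x c] by simp
      finally show "v $ c = (transpose_mat (submatrix A I UNIV) *\<^sub>v x) $ c" .
    qed
    then show "v \<in> row_space (submatrix A I UNIV)" unfolding row_space_def using dimB x by auto
  qed
qed

definition lcomb :: "nat \<Rightarrow> 'a::comm_ring_1 vec list \<Rightarrow> 'a vec \<Rightarrow> bool" where
  "lcomb N L v \<longleftrightarrow> (\<exists>y. \<forall>a<N. v $ a = (\<Sum>j<length L. y j * L ! j $ a))"

lemma rank_gen_list:
  fixes A :: "'a::field mat"
  assumes A: "A \<in> carrier_mat N K"
  shows "\<exists>L. set L \<subseteq> carrier_vec N \<and> length L \<le> vec_space.rank N A \<and> (\<forall>c<K. lcomb N L (col A c))"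
proof -
  interpret vs: vec_space "TYPE('a)" N .
  obtain S where maxS: "maximal S (\<lambda>T. T \<subseteq> set (cols A) \<and> vs.lin_indpt T)"
    using maximal_exists[of "(\<lambda>T. T \<subseteq> set (cols A) \<and> vs.lin_indpt T)" "card (set (cols A))" "{}"]
    by (meson List.finite_set card_mono empty_iff empty_subsetI vs.finite_lin_indpt2 rev_finite_subset)
  have rk: "vs.rank A = card S" using vs.rank_card_indpt[OF A maxS] .
  have SA: "S \<subseteq> set (cols A)" and li: "vs.lin_indpt S" using maxS unfolding maximal_def by auto
  have colsN: "set (cols A) \<subseteq> carrier_vec N" using A cols_dim by blast
  have SN: "S \<subseteq> carrier_vec N" using SA colsN by auto
  have finS: "finite S" using SA finite_subset by blast
  have inspan: "col A c \<in> vs.span S" if c: "c < K" for c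
  proof -
    have cA: "col A c \<in> set (cols A)" using c A by (simp add: cols_def)
    have cN: "col A c \<in> carrier_vec N" using cA colsN by auto
    show ?thesis
    proof (cases "col A c \<in> S")
      case True
      then show ?thesis using vs.in_own_span[OF SN] by auto
    next
      case False
      have "\<not> (S \<union> {col A c} \<subseteq> set (cols A) \<and> vs.lin_indpt (S \<union> {col A c}))"
      proof
        assume "S \<union> {col A c} \<subseteq> set (cols A) \<and> vs.lin_indpt (S \<union> {col A c})"
        then have "S \<union> {col A c} = S" using maxS unfolding maximal_def by blast
        then show False using False by auto
      qed
      then have "vs.lin_dep (S \<union> {col A c})" using SA cA by auto
      then show ?thesis using vs.lin_dep_iff_in_span[OF _ li _ False] SN cN by auto
    qed
  qed
  obtain L where L: "set L = S" "distinct L" using finite_distinct_list[OF finS] by blast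
  have lenL: "length L = card S" using L distinct_card by fastforce
  have LN: "set L \<subseteq> carrier_vec N" using L SN by simp
  have "lcomb N L (col A c)" if c: "c < K" for c
  proof -
    have "col A c \<in> vs.span_list L" using inspan[OF c] vs.span_list_as_span[OF LN] L by simp
    then obtain y where y: "col A c = vs.lincomb_list y L"
      by (auto elim: vs.in_span_listE)
    have "\<forall>w\<in>set L. dim_vec w = N" using LN by auto
    then have y2: "col A c = mat_of_cols N L *\<^sub>v vec (length L) y"
      using y vs.lincomb_list_as_mat_mult by simp
    show ?thesis unfolding lcomb_def
    proof (intro exI allI impI)
      fix a assume a: "a < N"
      have "col A c $ a = row (mat_of_cols N L) a \<bullet> vec (length L) y"
        using y2 a by simp
      also have "\<dots> = (\<Sum>j\<in>{0..<length L}. row (mat_of_cols N L) a $ j * vec (length L) y $ j)"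
        unfolding scalar_prod_def by simp
      also have "\<dots> = (\<Sum>j<length L. y j * L ! j $ a)"
        using a by (auto simp: lessThan_atLeast0 mat_of_cols_index intro!: sum.cong)
      finally show "col A c $ a = (\<Sum>j<length L. y j * L ! j $ a)" .
    qed
  qed
  then show ?thesis using LN lenL rk by auto
qed

lemma emb_sum:
  fixes emb :: "'f::field \<Rightarrow> 'a::field"
  assumes emb_add: "\<And>x y. emb (x + y) = emb x + emb y"
  shows "emb (\<Sum>x\<in>A. f x) = (\<Sum>x\<in>A. emb (f x))"
proof -
  have e0: "emb 0 = 0" using emb_add[of 0 0] by (metis add.right_neutral add_left_cancel)
  show ?thesis
  proof (induction A rule: infinite_finite_induct)
    case (infinite A) then show ?case using e0 by simp
  next
    case empty then show ?case using e0 by simp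
  next
    case (insert x F) then show ?case using emb_add by simp
  qed
qed

lemma ext_elem_prop:
  fixes emb :: "'f::field \<Rightarrow> 'a::field"
  assumes b_len: "length b = m"
    and b_basis: "\<And>\<alpha>. \<exists>!c. c \<in> carrier_vec m \<and> \<alpha> = (\<Sum>j<m. emb (c $ j) * b ! j)"
  shows "\<alpha> = (\<Sum>j<m. emb (ext_elem emb b \<alpha> $ j) * b ! j)"
proof -
  have "ext_elem emb b \<alpha> \<in> carrier_vec m \<and> \<alpha> = (\<Sum>j<m. emb (ext_elem emb b \<alpha> $ j) * b ! j)"
    unfolding ext_elem_def b_len by (rule theI', rule b_basis)
  then show ?thesis by blast
qed

lemma ext_gen:
  fixes emb :: "'f::field \<Rightarrow> 'a::field"
  assumes emb_add: "\<And>x y. emb (x + y) = emb x + emb y"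
    and emb_mult: "\<And>x y. emb (x * y) = emb x * emb y"
    and b_len: "length b = m" and m_pos: "m \<ge> 1"
    and b_basis: "\<And>\<alpha>. \<exists>!c. c \<in> carrier_vec m \<and> \<alpha> = (\<Sum>j<m. emb (c $ j) * b ! j)"
    and X: "X \<in> carrier_mat s K"
  shows "\<exists>L. set L \<subseteq> carrier_vec s \<and> length L \<le> rank_q emb b X \<and> (\<forall>c<K. lcomb s L (col X c))"
proof -
  define Y where "Y = ext_mat emb b X"
  have Y: "Y \<in> carrier_mat (s * m) K" using X b_len unfolding Y_def ext_mat_def by auto
  have rk: "rank_q emb b X = vec_space.rank (s * m) Y"
    unfolding rank_q_def Y_def[symmetric] using Y by simp
  have Yent: "Y $$ (a * m + l, c) = ext_elem emb b (X $$ (a, c)) $ l" if "a < s" "l < m" "c < K" for a l c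
  proof -
    have lt: "a * m + l < s * m"
    proof -
      have "a * m + l < a * m + m" using that by simp
      also have "\<dots> = (Suc a) * m" by simp
      also have "\<dots> \<le> s * m" using that by (intro mult_le_mono1) simp
      finally show ?thesis .
    qed
    have "(a * m + l) div m = a" "(a * m + l) mod m = l" using that m_pos by auto
    then show ?thesis unfolding Y_def ext_mat_def using lt that X b_len by auto
  qed
  obtain B where B: "set B \<subseteq> carrier_vec (s * m)" "length B \<le> vec_space.rank (s * m) Y"
    "\<forall>c<K. lcomb (s * m) B (col Y c)"
    using rank_gen_list[OF Y] by blast
  define psi where "psi = (\<lambda>w::'f vec. vec s (\<lambda>a. \<Sum>l<m. emb (w $ (a * m + l)) * b ! l))"
  define L where "L = map psi B"
  have "lcomb s L (col X c)" if c: "c < K" for c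
  proof -
    obtain y where y: "\<forall>a'<s * m. col Y c $ a' = (\<Sum>j<length B. y j * B ! j $ a')"
      using B(3) c unfolding lcomb_def by blast
    show ?thesis unfolding lcomb_def
    proof (intro exI allI impI)
      fix a assume a: "a < s"
      have ix: "a * m + l < s * m" if "l < m" for l
      proof -
        have "a * m + l < a * m + m" using that by simp
        also have "\<dots> = (Suc a) * m" by simp
        also have "\<dots> \<le> s * m" using a by (intro mult_le_mono1) simp
        finally show ?thesis .
      qed
      have "col X c $ a = X $$ (a, c)" using a c X by simp
      also have "\<dots> = (\<Sum>l<m. emb (ext_elem emb b (X $$ (a, c)) $ l) * b ! l)"
        by (rule ext_elem_prop[OF b_len b_basis])
      also have "\<dots> = (\<Sum>l<m. emb (\<Sum>j<length B. y j * B ! j $ (a * m + l)) * b ! l)"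
      proof (rule sum.cong)
        fix l assume l: "l \<in> {..<m}"
        have "ext_elem emb b (X $$ (a, c)) $ l = Y $$ (a * m + l, c)" using Yent a l c by simp
        also have "\<dots> = col Y c $ (a * m + l)" using ix l Y c by simp
        also have "\<dots> = (\<Sum>j<length B. y j * B ! j $ (a * m + l))" using y ix l by simp
        finally show "emb (ext_elem emb b (X $$ (a, c)) $ l) * b ! l
          = emb (\<Sum>j<length B. y j * B ! j $ (a * m + l)) * b ! l" by simp
      qed simp
      also have "\<dots> = (\<Sum>l<m. \<Sum>j<length B. emb (y j) * (emb (B ! j $ (a * m + l)) * b ! l))"
        by (simp add: emb_sum[OF emb_add] emb_mult sum_distrib_right mult.assoc)
      also have "\<dots> = (\<Sum>j<length B. \<Sum>l<m. emb (y j) * (emb (B ! j $ (a * m + l)) * b ! l))"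
        by (rule sum.swap)
      also have "\<dots> = (\<Sum>j<length L. emb (y j) * L ! j $ a)"
        unfolding L_def psi_def using a by (simp add: sum_distrib_left)
      finally show "col X c $ a = (\<Sum>j<length L. (emb \<circ> y) j * L ! j $ a)" by simp
    qed
  qed
  moreover have "set L \<subseteq> carrier_vec s" unfolding L_def psi_def by auto
  moreover have "length L \<le> rank_q emb b X" using B(2) rk unfolding L_def by simp
  ultimately show ?thesis by blast
qed

lemma lcomb_mono:
  fixes L1 L2 :: "'a::comm_ring_1 vec list"
  assumes sub: "set L1 \<subseteq> set L2" and v: "lcomb N L1 v"
  shows "lcomb N L2 v"
proof -
  obtain y where y: "\<forall>a<N. v $ a = (\<Sum>j<length L1. y j * L1 ! j $ a)" using v unfolding lcomb_def by blast
  define f where "f = (\<lambda>j. SOME k. k < length L2 \<and> L2 ! k = L1 ! j)"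
  have f: "f j < length L2 \<and> L2 ! f j = L1 ! j" if "j < length L1" for j
  proof -
    have "L1 ! j \<in> set L2" using sub that by auto
    then have "\<exists>k. k < length L2 \<and> L2 ! k = L1 ! j" by (metis in_set_conv_nth)
    then show ?thesis unfolding f_def by (rule someI_ex)
  qed
  define y2 where "y2 = (\<lambda>k. \<Sum>j\<in>{j\<in>{..<length L1}. f j = k}. y j)"
  show ?thesis unfolding lcomb_def
  proof (intro exI allI impI)
    fix a assume a: "a < N"
    have "(\<Sum>k<length L2. y2 k * L2 ! k $ a) = (\<Sum>k<length L2. \<Sum>j\<in>{j\<in>{..<length L1}. f j = k}. y j * L2 ! k $ a)"
      unfolding y2_def by (simp add: sum_distrib_right)
    also have "\<dots> = (\<Sum>k<length L2. \<Sum>j\<in>{j\<in>{..<length L1}. f j = k}. y j * L1 ! j $ a)"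
      using f by (intro sum.cong refl) auto
    also have "\<dots> = (\<Sum>j<length L1. y j * L1 ! j $ a)"
      by (rule sum.group) (use f in auto)
    finally show "v $ a = (\<Sum>k<length L2. y2 k * L2 ! k $ a)" using y a by simp
  qed
qed

lemma pick_interval: "c < k \<Longrightarrow> pick {d..<d + k} c = d + c"
proof (induction c)
  case 0
  then show ?case by (auto intro!: Least_equality)
next
  case (Suc c)
  then have "pick {d..<d + k} c = d + c" by simp
  then show ?case using Suc.prems by (auto intro!: Least_equality)
qed

lemma sum_list_take_le: "sum_list (take i (ns::nat list)) \<le> sum_list ns"
  by (metis append_take_drop_id le_add1 sum_list_append)

lemma col_block_facts:
  assumes E: "E \<in> carrier_mat s n" and n: "n = sum_list ns" and i: "i < length ns"
  shows "col_block ns i E \<in> carrier_mat s (ns ! i)"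
    "\<And>a c. a < s \<Longrightarrow> c < ns ! i \<Longrightarrow> col_block ns i E $$ (a, c) = E $$ (a, sum_list (take i ns) + c)"
proof -
  define d where "d = sum_list (take i ns)"
  have tk: "sum_list (take (Suc i) ns) = d + ns ! i" unfolding d_def using i by (simp add: take_Suc_conv_app_nth)
  have le: "d + ns ! i \<le> n" using sum_list_take_le[of "Suc i" ns] tk n by simp
  have cR: "{a. a < dim_row E \<and> a \<in> UNIV} = {..<s}" using E by auto
  have cC: "{j. j < dim_col E \<and> j \<in> {d..<d + ns ! i}} = {d..<d + ns ! i}" using E le by auto
  show "col_block ns i E \<in> carrier_mat s (ns ! i)"
    unfolding col_block_def carrier_mat_def tk d_def[symmetric] using cR cC by (simp add: dim_submatrix)
  fix a c assume a: "a < s" and c: "c < ns ! i"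
  have "col_block ns i E $$ (a, c) = E $$ (pick UNIV a, pick {d..<d + ns ! i} c)"
    unfolding col_block_def tk d_def[symmetric] using a c cR cC by (intro submatrix_index) auto
  then show "col_block ns i E $$ (a, c) = E $$ (a, sum_list (take i ns) + c)"
    using pick_interval[OF c] by (simp add: pick_UNIV d_def)
qed

lemma find_block:
  fixes ns :: "nat list"
  shows "c < sum_list ns \<Longrightarrow> \<exists>i<length ns. sum_list (take i ns) \<le> c \<and> c < sum_list (take i ns) + ns ! i"
proof (induction ns arbitrary: c)
  case Nil then show ?case by simp
next
  case (Cons x ns)
  show ?case
  proof (cases "c < x")
    case True then show ?thesis by (intro exI[of _ 0]) auto
  next
    case False
    then have "c - x < sum_list ns" using Cons.prems by simp
    then obtain i where "i < length ns" "sum_list (take i ns) \<le> c - x" "c - x < sum_list (take i ns) + ns ! i"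
      using Cons.IH by blast
    then show ?thesis using False by (intro exI[of _ "Suc i"]) auto
  qed
qed

lemma blocks_gen:
  fixes E :: "'a::comm_ring_1 mat"
  assumes E: "E \<in> carrier_mat s n" and n: "n = sum_list ns" and ts: "length ts = length ns"
    and blk: "\<forall>i<length ns. \<exists>L. set L \<subseteq> carrier_vec s \<and> length L \<le> ts ! i
        \<and> (\<forall>c<ns ! i. lcomb s L (col (col_block ns i E) c))"
  shows "\<exists>L. set L \<subseteq> carrier_vec s \<and> length L \<le> sum_list ts \<and> (\<forall>c<n. lcomb s L (col E c))"
proof -
  obtain Lf where Lf: "\<forall>i<length ns. set (Lf i) \<subseteq> carrier_vec s \<and> length (Lf i) \<le> ts ! i
        \<and> (\<forall>c<ns ! i. lcomb s (Lf i) (col (col_block ns i E) c))"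
    using blk by metis
  define L where "L = concat (map Lf [0..<length ns])"
  have setL: "set L \<subseteq> carrier_vec s" unfolding L_def using Lf by auto
  have "length L = (\<Sum>i\<leftarrow>[0..<length ns]. length (Lf i))" unfolding L_def by (simp add: length_concat o_def)
  also have "\<dots> \<le> (\<Sum>i\<leftarrow>[0..<length ns]. ts ! i)"
    using Lf by (intro sum_list_mono) auto
  also have "\<dots> = sum_list ts" using ts by (metis map_nth)
  finally have lenL: "length L \<le> sum_list ts" .
  have "lcomb s L (col E c)" if c: "c < n" for c
  proof -
    obtain i where i: "i < length ns" "sum_list (take i ns) \<le> c" "c < sum_list (take i ns) + ns ! i"
      using find_block[of c ns] c n by blast
    define c' where "c' = c - sum_list (take i ns)"
    have c': "c' < ns ! i" "c = sum_list (take i ns) + c'" using i unfolding c'_def by auto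
    have cb: "col_block ns i E \<in> carrier_mat s (ns ! i)" using col_block_facts(1)[OF E n i(1)] .
    have "col (col_block ns i E) c' = col E c"
      using cb c' col_block_facts(2)[OF E n i(1)] E c by (intro eq_vecI) auto
    moreover have "lcomb s (Lf i) (col (col_block ns i E) c')" using Lf i(1) c'(1) by blast
    moreover have "set (Lf i) \<subseteq> set L" unfolding L_def using i(1) by auto
    ultimately show ?thesis using lcomb_mono by metis
  qed
  then show ?thesis using setL lenL by blast
qed

lemma right_inv_transpose:
  fixes P :: "'a::field mat"
  assumes P: "P \<in> carrier_mat N N" and rk: "vec_space.rank N P = N"
  shows "\<exists>Q \<in> carrier_mat N N. transpose_mat P * Q = 1\<^sub>m N"
proof -
  have "det P \<noteq> 0" using vec_space.det_rank_iff[OF P] rk by simp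
  then have "det (transpose_mat P) \<noteq> 0" using det_transpose[OF P] by simp
  moreover have PT: "transpose_mat P \<in> carrier_mat N N" using P by simp
  ultimately have "transpose_mat P \<in> Units (ring_mat TYPE('a) N ())"
    using det_non_zero_imp_unit[OF PT] by simp
  then obtain Q where "Q \<in> carrier_mat N N" "transpose_mat P * Q = 1\<^sub>m N"
    unfolding Units_def ring_mat_simps by blast
  then show ?thesis by blast
qed

lemma full_rank_surj:
  fixes H :: "'a::field mat"
  assumes H: "H \<in> carrier_mat N n" and rk: "vec_space.rank N H = N" and e: "e \<in> carrier_vec N"
  shows "\<exists>y \<in> carrier_vec n. H *\<^sub>v y = e"
proof -
  interpret vs: vec_space "TYPE('a)" N .
  obtain S where maxS: "maximal S (\<lambda>T. T \<subseteq> set (cols H) \<and> vs.lin_indpt T)"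
    using maximal_exists[of "(\<lambda>T. T \<subseteq> set (cols H) \<and> vs.lin_indpt T)" "card (set (cols H))" "{}"]
    by (meson List.finite_set card_mono empty_iff empty_subsetI vs.finite_lin_indpt2 rev_finite_subset)
  have cS: "card S = N" using vs.rank_card_indpt[OF H maxS] rk by simp
  have SA: "S \<subseteq> set (cols H)" and li: "vs.lin_indpt S" using maxS unfolding maximal_def by auto
  have colsN: "set (cols H) \<subseteq> carrier_vec N" using H cols_dim by blast
  have SN: "S \<subseteq> carrier_vec N" using SA colsN by auto
  have finS: "finite S" using SA finite_subset by blast
  have "vs.basis S" using vs.dim_li_is_basis[OF vs.fin_dim finS _ li] SN cS vs.dim_is_n by simp
  then have "vs.span S = carrier_vec N" unfolding vs.basis_def by simp
  moreover have "vs.span S \<subseteq> vs.span (set (cols H))" using vs.span_is_monotone[OF SA] .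
  ultimately have "e \<in> vs.span (set (cols H))" using e by auto
  then have "e \<in> vs.span_list (cols H)" using vs.span_list_as_span[OF colsN] by simp
  then obtain c where c: "e = vs.lincomb_list c (cols H)" by (auto elim: vs.in_span_listE)
  have "\<forall>w\<in>set (cols H). dim_vec w = N" using colsN by auto
  then have "e = mat_of_cols N (cols H) *\<^sub>v vec (length (cols H)) c"
    using c vs.lincomb_list_as_mat_mult by simp
  also have "mat_of_cols N (cols H) = H" using H mat_of_cols_cols[of H] by simp
  finally have "e = H *\<^sub>v vec (length (cols H)) c" .
  moreover have "vec (length (cols H)) c \<in> carrier_vec n" using H by simp
  ultimately show ?thesis by blast
qed

lemma dual_code_row_space:
  fixes H :: "'a::field mat"
  assumes H: "H \<in> carrier_mat N n" and rk: "vec_space.rank N H = N"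
  shows "dual_code n {c \<in> carrier_vec n. H *\<^sub>v c = 0\<^sub>v N} = row_space H"
proof (rule Set.set_eqI, rule iffI)
  fix v assume v: "v \<in> dual_code n {c \<in> carrier_vec n. H *\<^sub>v c = 0\<^sub>v N}"
  then have vn: "v \<in> carrier_vec n" and orth: "\<And>c. c \<in> carrier_vec n \<Longrightarrow> H *\<^sub>v c = 0\<^sub>v N \<Longrightarrow> v \<bullet> c = 0"
    unfolding dual_code_def by auto
  have "\<forall>j. \<exists>y. j < N \<longrightarrow> y \<in> carrier_vec n \<and> H *\<^sub>v y = unit_vec N j"
    using full_rank_surj[OF H rk] unit_vec_carrier by (metis (no_types, lifting))
  then obtain yf where yf: "\<And>j. j < N \<Longrightarrow> yf j \<in> carrier_vec n \<and> H *\<^sub>v yf j = unit_vec N j" by metis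
  define K where "K = mat n N (\<lambda>(i, j). yf j $ i)"
  have K: "K \<in> carrier_mat n N" unfolding K_def by simp
  have colK: "col K j = yf j" if "j < N" for j
    using yf[OF that] that unfolding K_def by (intro eq_vecI) auto
  have HK: "H * K = 1\<^sub>m N"
  proof (rule eq_matI)
    fix i j assume i: "i < dim_row (1\<^sub>m N)" and j: "j < dim_col (1\<^sub>m N)"
    have "(H * K) $$ (i, j) = row H i \<bullet> col K j" using H K i j by simp
    also have "\<dots> = (H *\<^sub>v yf j) $ i" using colK j i H by simp
    also have "\<dots> = 1\<^sub>m N $$ (i, j)" using yf j i by simp
    finally show "(H * K) $$ (i, j) = 1\<^sub>m N $$ (i, j)" .
  qed (use H K in auto)
  define w where "w = transpose_mat K *\<^sub>v v"
  have w: "w \<in> carrier_vec N" unfolding w_def carrier_vec_def using K by simp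
  have "v = transpose_mat H *\<^sub>v w"
  proof (rule eq_vecI)
    show "dim_vec v = dim_vec (transpose_mat H *\<^sub>v w)" using vn H by simp
    fix c assume "c < dim_vec (transpose_mat H *\<^sub>v w)"
    then have c: "c < n" using H by simp
    define u :: "'a vec" where "u = unit_vec n c"
    have u: "u \<in> carrier_vec n" unfolding u_def by simp
    have Hu: "H *\<^sub>v u \<in> carrier_vec N" using H u by simp
    have KHu: "K *\<^sub>v (H *\<^sub>v u) \<in> carrier_vec n" using K Hu by simp
    have "H *\<^sub>v (u - K *\<^sub>v (H *\<^sub>v u)) = H *\<^sub>v u - H *\<^sub>v (K *\<^sub>v (H *\<^sub>v u))"
      using H u KHu by (simp add: mult_minus_distrib_mat_vec)
    also have "H *\<^sub>v (K *\<^sub>v (H *\<^sub>v u)) = (H * K) *\<^sub>v (H *\<^sub>v u)"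
      using H K Hu by (simp add: assoc_mult_mat_vec)
    also have "\<dots> = H *\<^sub>v u" using HK Hu by simp
    finally have "H *\<^sub>v (u - K *\<^sub>v (H *\<^sub>v u)) = 0\<^sub>v N" using Hu by simp
    then have "v \<bullet> (u - K *\<^sub>v (H *\<^sub>v u)) = 0" using orth u KHu by simp
    then have "v \<bullet> u = v \<bullet> (K *\<^sub>v (H *\<^sub>v u))"
      using vn u KHu by (simp add: scalar_prod_minus_distrib)
    also have "\<dots> = w \<bullet> (H *\<^sub>v u)"
      unfolding w_def using transpose_vec_mult_scalar[OF K Hu vn] by simp
    also have "\<dots> = (transpose_mat H *\<^sub>v w) \<bullet> u"
      using transpose_vec_mult_scalar[OF H u w] by simp
    finally have "v \<bullet> u = (transpose_mat H *\<^sub>v w) \<bullet> u" .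
    then show "v $ c = (transpose_mat H *\<^sub>v w) $ c" unfolding u_def using c by simp
  qed
  then show "v \<in> row_space H" unfolding row_space_def using w H by auto
next
  fix v assume "v \<in> row_space H"
  then obtain x where x: "x \<in> carrier_vec N" and v: "v = transpose_mat H *\<^sub>v x"
    unfolding row_space_def using H by auto
  have vn: "v \<in> carrier_vec n" using v H unfolding carrier_vec_def by simp
  have "v \<bullet> c = 0" if c: "c \<in> carrier_vec n" "H *\<^sub>v c = 0\<^sub>v N" for c
  proof -
    have "v \<bullet> c = x \<bullet> (H *\<^sub>v c)" using v transpose_vec_mult_scalar[OF H c(1) x] by simp
    then show ?thesis using c x by simp
  qed
  then show "v \<in> dual_code n {c \<in> carrier_vec n. H *\<^sub>v c = 0\<^sub>v N}" unfolding dual_code_def using vn by auto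
qed

theorem lemma2:
  fixes emb :: "'f::{field,finite} \<Rightarrow> 'a::{field,finite}"
    and b :: "'a list" and q m n k s t :: nat and ns ts :: "nat list"
    and C :: "'a vec set" and H E P :: "'a mat"
  assumes q_def: "q = card (UNIV :: 'f set)"
    and m_pos: "m \<ge> 1"
    and card_big: "card (UNIV :: 'a set) = q ^ m"
    and emb_add: "\<And>x y. emb (x + y) = emb x + emb y"
    and emb_mult: "\<And>x y. emb (x * y) = emb x * emb y"
    and emb_one: "emb 1 = 1"
    and b_len: "length b = m"
    and b_basis: "\<And>\<alpha>. \<exists>!c. c \<in> carrier_vec m \<and> \<alpha> = (\<Sum>j<m. emb (c $ j) * b ! j)"
    and ns_pos: "\<forall>i < length ns. ns ! i > 0"
    and n_def: "n = sum_list ns"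
    and k_le: "k \<le> n"
    and H_dim: "H \<in> carrier_mat (n - k) n"
    and H_rank: "rank_qm H = n - k"
    and C_def: "C = {c \<in> carrier_vec n. H *\<^sub>v c = 0\<^sub>v (n - k)}"
    and s_pos: "s \<ge> 1"
    and E_dim: "E \<in> carrier_mat s n"
    and ts_len: "length ts = length ns"
    and E_blocks: "\<forall>i < length ns. rank_q emb b (col_block ns i E) = ts ! i"
    and t_def: "t = sum_list ts"
    and t_lt: "t < n - k"
    and P_dim: "P \<in> carrier_mat (n - k) (n - k)"
    and P_rank: "rank_qm P = n - k"
    and PS_ref: "row_echelon (P * (H * transpose_mat E))"
  shows "card (zero_rows (P * (H * transpose_mat E))) \<ge> n - k - t
    \<and> row_space (submatrix (P * H) (zero_rows (P * (H * transpose_mat E))) UNIV)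
          = right_kernel E \<inter> dual_code n C
    \<and> row_space (submatrix (P * H) (zero_rows (P * (H * transpose_mat E))) UNIV)
          = right_kernel E \<inter> row_space H"
proof -
  define N where "N = n - k"
  define PS where "PS = P * (H * transpose_mat E)"
  have H: "H \<in> carrier_mat N n" using H_dim by (simp add: N_def)
  have P: "P \<in> carrier_mat N N" using P_dim by (simp add: N_def)
  have Et: "transpose_mat E \<in> carrier_mat n s" using E_dim by simp
  have Ht: "transpose_mat H \<in> carrier_mat n N" using H by simp
  have Pt: "transpose_mat P \<in> carrier_mat N N" using P by simp
  have HEt: "H * transpose_mat E \<in> carrier_mat N s" using H Et by simp
  have PS: "PS \<in> carrier_mat N s" unfolding PS_def using P HEt by simp
  have PH: "P * H \<in> carrier_mat N n" using P H by simp
  have HtPt: "transpose_mat H * transpose_mat P \<in> carrier_mat n N" using Ht Pt by simp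
  obtain r where r: "r \<le> N" "\<forall>j<N. (row PS j = 0\<^sub>v s) \<longleftrightarrow> r \<le> j"
    "\<forall>z \<in> carrier_vec N. transpose_mat PS *\<^sub>v z = 0\<^sub>v s \<longrightarrow> (\<forall>j<r. z $ j = 0)"
    using echelon_facts[OF PS_ref[folded PS_def]] PS by auto
  have Z: "zero_rows PS = {r..<N}" unfolding zero_rows_def using r(2) PS by auto
  have PST: "transpose_mat PS = E * (transpose_mat H * transpose_mat P)"
  proof -
    have "transpose_mat PS = transpose_mat (H * transpose_mat E) * transpose_mat P"
      unfolding PS_def using transpose_mult[OF P HEt] .
    also have "transpose_mat (H * transpose_mat E) = E * transpose_mat H"
      using transpose_mult[OF H Et] by simp
    also have "(E * transpose_mat H) * transpose_mat P = E * (transpose_mat H * transpose_mat P)"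
      using E_dim Ht Pt by (rule assoc_mult_mat)
    finally show ?thesis .
  qed
  
  have blk: "\<forall>i<length ns. \<exists>L. set L \<subseteq> carrier_vec s \<and> length L \<le> ts ! i
        \<and> (\<forall>c<ns ! i. lcomb s L (col (col_block ns i E) c))"
  proof (intro allI impI)
    fix i assume i: "i < length ns"
    have X: "col_block ns i E \<in> carrier_mat s (ns ! i)" using col_block_facts(1)[OF E_dim n_def i] .
    show "\<exists>L. set L \<subseteq> carrier_vec s \<and> length L \<le> ts ! i
        \<and> (\<forall>c<ns ! i. lcomb s L (col (col_block ns i E) c))"
      using ext_gen[OF emb_add emb_mult b_len m_pos b_basis X] E_blocks i by simp
  qed
  obtain L where L: "set L \<subseteq> carrier_vec s" "length L \<le> t" "\<forall>c<n. lcomb s L (col E c)"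
    using blocks_gen[OF E_dim n_def ts_len blk] t_def by blast
  define t' where "t' = length L"
  have "\<forall>c. \<exists>y. c < n \<longrightarrow> (\<forall>a<s. col E c $ a = (\<Sum>j<t'. y j * L ! j $ a))"
    using L(3) unfolding lcomb_def t'_def by blast
  then obtain yc where yc: "\<And>c a. c < n \<Longrightarrow> a < s \<Longrightarrow> col E c $ a = (\<Sum>j<t'. yc c j * L ! j $ a)"
    by metis
  define G where "G = mat s t' (\<lambda>(a, j). L ! j $ a)"
  define Y0 where "Y0 = mat t' n (\<lambda>(j, c). yc c j)"
  have G: "G \<in> carrier_mat s t'" unfolding G_def by simp
  have Y0: "Y0 \<in> carrier_mat t' n" unfolding Y0_def by simp
  have EG: "E = G * Y0"
  proof (rule eq_matI)
    fix a c assume a: "a < dim_row (G * Y0)" and c: "c < dim_col (G * Y0)"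
    then have a': "a < s" and c': "c < n" using G Y0 by auto
    have "(G * Y0) $$ (a, c) = row G a \<bullet> col Y0 c" using a c by simp
    also have "\<dots> = (\<Sum>j\<in>{0..<t'}. row G a $ j * col Y0 c $ j)" unfolding scalar_prod_def using Y0 by simp
    also have "\<dots> = (\<Sum>j<t'. yc c j * L ! j $ a)"
      using a' c' unfolding G_def Y0_def by (auto simp: lessThan_atLeast0 intro!: sum.cong)
    also have "\<dots> = col E c $ a" using yc[OF c' a'] by simp
    also have "\<dots> = E $$ (a, c)" using E_dim a' c' by simp
    finally show "E $$ (a, c) = (G * Y0) $$ (a, c)" by simp
  qed (use E_dim G Y0 in auto)
  have rt: "r \<le> t'"
  proof (rule ccontr)
    assume "\<not> r \<le> t'"
    then have tr: "t' < r" by simp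
    define Y where "Y = Y0 * (transpose_mat H * transpose_mat P)"
    have Y: "Y \<in> carrier_mat t' N" unfolding Y_def using Y0 HtPt by simp
    have PST2: "transpose_mat PS = G * Y"
      unfolding PST EG Y_def using G Y0 HtPt by (rule assoc_mult_mat)
    define Y' where "Y' = mat r r (\<lambda>(i, j). if i < t' then Y $$ (i, j) else 0)"
    have Y': "Y' \<in> carrier_mat r r" unfolding Y'_def by simp
    have "Y' = mat\<^sub>r r r (\<lambda>i. if i = t' then 0\<^sub>v r else row Y' i)"
      by (rule eq_matI) (auto simp: Y'_def)
    then have "det Y' = 0" using det_row_0[OF tr, of "\<lambda>i. row Y' i"] Y' by simp
    then obtain v where v: "v \<in> carrier_vec r" "v \<noteq> 0\<^sub>v r" "Y' *\<^sub>v v = 0\<^sub>v r"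
      using det_0_iff_vec_prod_zero_field[OF Y'] by blast
    define z where "z = vec N (\<lambda>j. if j < r then v $ j else 0)"
    have z: "z \<in> carrier_vec N" unfolding z_def by simp
    have Yz: "Y *\<^sub>v z = 0\<^sub>v t'"
    proof (rule eq_vecI)
      fix i assume "i < dim_vec (0\<^sub>v t' :: 'a vec)"
      then have i: "i < t'" by simp
      have "(Y *\<^sub>v z) $ i = row Y i \<bullet> z" using Y i by simp
      also have "\<dots> = (\<Sum>j\<in>{0..<N}. Y $$ (i, j) * z $ j)"
        unfolding scalar_prod_def using Y i z by (auto intro!: sum.cong)
      also have "\<dots> = (\<Sum>j\<in>{0..<r}. Y $$ (i, j) * z $ j)"
        by (rule sum.mono_neutral_right) (use r(1) in \<open>auto simp: z_def\<close>)
      also have "\<dots> = (\<Sum>j\<in>{0..<r}. Y' $$ (i, j) * v $ j)"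
        using i tr r(1) by (auto simp: z_def Y'_def intro!: sum.cong)
      also have "\<dots> = row Y' i \<bullet> v" unfolding scalar_prod_def using v(1) Y' i tr by (auto intro!: sum.cong)
      also have "\<dots> = (Y' *\<^sub>v v) $ i" using Y' i tr by simp
      also have "\<dots> = 0" using v(3) i tr by simp
      finally show "(Y *\<^sub>v z) $ i = 0\<^sub>v t' $ i" using i by simp
    qed (use Y in simp)
    have G0: "G *\<^sub>v 0\<^sub>v t' = 0\<^sub>v s" using G by (intro eq_vecI) (auto simp: scalar_prod_def)
    have "transpose_mat PS *\<^sub>v z = G *\<^sub>v (Y *\<^sub>v z)"
      unfolding PST2 using G Y z by simp
    then have "transpose_mat PS *\<^sub>v z = 0\<^sub>v s" using Yz G0 by simp
    then have "\<forall>j<r. z $ j = 0" using r(3) z by blast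
    then have "v = 0\<^sub>v r" using v(1) r(1) by (intro eq_vecI) (auto simp: z_def)
    then show False using v(2) by simp
  qed
  have part1: "card (zero_rows PS) \<ge> n - k - t"
    unfolding Z using rt L(2) t'_def by (simp add: N_def)
  
  have I: "zero_rows PS \<subseteq> {..<N}" unfolding Z by auto
  have RS: "row_space (submatrix (P * H) (zero_rows PS) UNIV) =
    {transpose_mat (P * H) *\<^sub>v z | z. z \<in> carrier_vec N \<and> (\<forall>j<N. j \<notin> zero_rows PS \<longrightarrow> z $ j = 0)}"
    using row_space_submatrix[OF PH I] .
  have PHT: "transpose_mat (P * H) = transpose_mat H * transpose_mat P"
    using transpose_mult[OF P H] .
  have part3: "row_space (submatrix (P * H) (zero_rows PS) UNIV) = right_kernel E \<inter> row_space H"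
  proof (rule Set.set_eqI, rule iffI)
    fix v assume "v \<in> row_space (submatrix (P * H) (zero_rows PS) UNIV)"
    then obtain z where z: "z \<in> carrier_vec N" "\<forall>j<N. j \<notin> zero_rows PS \<longrightarrow> z $ j = 0"
      and v: "v = transpose_mat (P * H) *\<^sub>v z" unfolding RS by blast
    have z0: "\<forall>j<r. z $ j = 0" using z(2) r(1) unfolding Z by auto
    have Ptz: "transpose_mat P *\<^sub>v z \<in> carrier_vec N" using Pt z by simp
    have v2: "v = transpose_mat H *\<^sub>v (transpose_mat P *\<^sub>v z)"
      unfolding v PHT using Ht Pt z by simp
    have vn: "v \<in> carrier_vec n" using v2 Ht Ptz by simp
    have "E *\<^sub>v v = transpose_mat PS *\<^sub>v z"
      unfolding v PHT PST using E_dim HtPt z by simp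
    also have "\<dots> = 0\<^sub>v s"
    proof (rule eq_vecI)
      fix c assume "c < dim_vec (0\<^sub>v s :: 'a vec)"
      then have c: "c < s" by simp
      have "(transpose_mat PS *\<^sub>v z) $ c = col PS c \<bullet> z" using PS c by simp
      also have "\<dots> = (\<Sum>j\<in>{0..<N}. PS $$ (j, c) * z $ j)"
        unfolding scalar_prod_def using PS c z by (auto intro!: sum.cong)
      also have "\<dots> = 0"
      proof (rule sum.neutral, rule ballI)
        fix j assume j: "j \<in> {0..<N}"
        show "PS $$ (j, c) * z $ j = 0"
        proof (cases "j < r")
          case True then show ?thesis using z0 by simp
        next
          case False
          then have "row PS j = 0\<^sub>v s" using r(2) j by auto
          then have "row PS j $ c = 0" using c by simp
          then show ?thesis using PS j c by simp
        qed
      qed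
      finally show "(transpose_mat PS *\<^sub>v z) $ c = 0\<^sub>v s $ c" using c by simp
    qed (use PS in simp)
    finally have "E *\<^sub>v v = 0\<^sub>v s" .
    then have "v \<in> right_kernel E" unfolding right_kernel_def using vn E_dim by simp
    moreover have "v \<in> row_space H" unfolding row_space_def using v2 Ptz H by auto
    ultimately show "v \<in> right_kernel E \<inter> row_space H" by blast
  next
    fix v assume "v \<in> right_kernel E \<inter> row_space H"
    then have vn: "v \<in> carrier_vec n" and Ev: "E *\<^sub>v v = 0\<^sub>v s" and "v \<in> row_space H"
      unfolding right_kernel_def using E_dim by auto
    then obtain y where y: "y \<in> carrier_vec N" and vy: "v = transpose_mat H *\<^sub>v y"
      unfolding row_space_def using H by auto
    have rkP: "vec_space.rank N P = N" using P_rank P unfolding rank_qm_def by (simp add: N_def)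
    obtain Q where Q: "Q \<in> carrier_mat N N" "transpose_mat P * Q = 1\<^sub>m N"
      using right_inv_transpose[OF P rkP] by blast
    define z where "z = Q *\<^sub>v y"
    have z: "z \<in> carrier_vec N" unfolding z_def using Q y by simp
    have "transpose_mat P *\<^sub>v z = (transpose_mat P * Q) *\<^sub>v y"
      unfolding z_def using Pt Q(1) y by simp
    also have "\<dots> = y" using Q(2) y by simp
    finally have Pz: "transpose_mat P *\<^sub>v z = y" .
    have vz: "v = transpose_mat (P * H) *\<^sub>v z"
      unfolding PHT vy Pz[symmetric] using Ht Pt z by simp
    have "transpose_mat PS *\<^sub>v z = E *\<^sub>v v"
      unfolding vz PHT PST using E_dim HtPt z by simp
    then have "transpose_mat PS *\<^sub>v z = 0\<^sub>v s" using Ev by simp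
    then have z0: "\<forall>j<r. z $ j = 0" using r(3) z by blast
    have "\<forall>j<N. j \<notin> zero_rows PS \<longrightarrow> z $ j = 0" unfolding Z using z0 by auto
    then show "v \<in> row_space (submatrix (P * H) (zero_rows PS) UNIV)"
      unfolding RS using z vz by blast
  qed
  have dual: "dual_code n C = row_space H"
  proof -
    have "vec_space.rank N H = N" using H_rank H unfolding rank_qm_def by (simp add: N_def)
    then show ?thesis unfolding C_def N_def[symmetric] using dual_code_row_space[OF H] by simp
  qed
  show ?thesis using part1 part3 dual unfolding PS_def by simp
qed

end
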